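(* Let $N\geq 1$, let $U\in M_{2N}(\mathbb{C})$ be unitary with $U^{\rm T}=-U$, and let $\Phi^U_{4N}$ be the map defined on block matrices $X=\begin{pmatrix} X_{11} & X_{12}\\ X_{21} & X_{22}\end{pmatrix}$ ($X_{kl}\in M_{2N}(\mathbb{C})$) by $$\Phi^U_{4N}(X)=\frac{1}{2N}\begin{pmatrix} \mathbb{I}_{2N}\,\mathrm{Tr}X_{22} & -\big(X_{12}+UX_{21}^{\rm T}U^\dagger\big)\\ -\big(X_{21}+UX_{12}^{\rm T}U^\dagger\big) & \mathbb{I}_{2N}\,\mathrm{Tr}X_{11}\end{pmatrix}.$$ Let $P^+_{4N}=\frac{1}{4N}\sum_{k,l=1}^{4N}|k\rangle\langle l|\otimes|k\rangle\langle l|$, $W^U_{4N}=(\mathrm{id}\otimes\Phi^U_{4N})P^+_{4N}$, and for $\lambda\in[0,1]$ let $\rho_\lambda=\frac{\lambda}{(4N)^2}\mathbb{I}_{4N}\otimes\mathbb{I}_{4N}+(1-\lambda)P^+_{4N}$ be the isotropic state. If $\rho_\lambda$ is entangled, equivalently if $\lambda<\frac{4N}{4N+1}$, then $\mathrm{Tr}(W^U_{4N}\rho_\lambda)<0$.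
   Context: $\{|k\rangle\}$ is the standard basis of $\mathbb{C}^{4N}$; $\mathrm{id}$ is the identity map on $M_{4N}(\mathbb{C})$. *)

theory Defs
  imports "Jordan_Normal_Form.Matrix" "HOL-Library.Complex_Order"
begin

text \<open>Standard basis vectors are indexed from 0; the tensor product of an n x n and an m x m
  matrix uses the basis ordering |i> (x) |j> |-> i*m + j (Kronecker product).\<close>

definition mtrace :: "complex mat \<Rightarrow> complex" where
  "mtrace A = (\<Sum>i<dim_row A. A $$ (i, i))"

definition adj :: "complex mat \<Rightarrow> complex mat" where
  "adj A = mat (dim_col A) (dim_row A) (\<lambda>(i, j). cnj (A $$ (j, i)))"

definition unitary_mat :: "nat \<Rightarrow> complex mat \<Rightarrow> bool" where
  "unitary_mat n U \<longleftrightarrow> U \<in> carrier_mat n n \<and> U * adj U = 1\<^sub>m n \<and> adj U * U = 1\<^sub>m n"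

definition kron :: "complex mat \<Rightarrow> complex mat \<Rightarrow> complex mat" where
  "kron A B = mat (dim_row A * dim_row B) (dim_col A * dim_col B)
     (\<lambda>(i, j). A $$ (i div dim_row B, j div dim_col B) * B $$ (i mod dim_row B, j mod dim_col B))"

definition ket_bra :: "nat \<Rightarrow> nat \<Rightarrow> nat \<Rightarrow> complex mat" where
  "ket_bra n k l = mat n n (\<lambda>(i, j). if i = k \<and> j = l then 1 else 0)"

definition PhiU :: "nat \<Rightarrow> complex mat \<Rightarrow> complex mat \<Rightarrow> complex mat" where
  "PhiU N U X = (let m = 2 * N; (X11, X12, X21, X22) = split_block X m m in
     (1 / of_nat (2 * N)) \<cdot>\<^sub>m
       four_block_mat (mtrace X22 \<cdot>\<^sub>m 1\<^sub>m m) (- (X12 + U * transpose_mat X21 * adj U))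
                      (- (X21 + U * transpose_mat X12 * adj U)) (mtrace X11 \<cdot>\<^sub>m 1\<^sub>m m))"

text \<open>(id_n (x) Phi) applied to an (n*m) x (n*m) matrix M: Phi (on M_m) is applied to each
  m x m block M_{kl} of M, i.e. (id (x) Phi)(sum |k><l| (x) M_{kl}) = sum |k><l| (x) Phi(M_{kl}).\<close>
definition id_tensor :: "nat \<Rightarrow> nat \<Rightarrow> (complex mat \<Rightarrow> complex mat) \<Rightarrow> complex mat \<Rightarrow> complex mat" where
  "id_tensor n m \<Phi> M = mat (n * m) (n * m) (\<lambda>(a, b).
     \<Phi> (mat m m (\<lambda>(i, j). M $$ ((a div m) * m + i, (b div m) * m + j))) $$ (a mod m, b mod m))"

definition Pplus :: "nat \<Rightarrow> complex mat" where
  "Pplus n = (1 / of_nat n) \<cdot>\<^sub>m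
     mat (n * n) (n * n) (\<lambda>(a, b). \<Sum>k<n. \<Sum>l<n. kron (ket_bra n k l) (ket_bra n k l) $$ (a, b))"

definition WU :: "nat \<Rightarrow> complex mat \<Rightarrow> complex mat" where
  "WU N U = id_tensor (4 * N) (4 * N) (PhiU N U) (Pplus (4 * N))"

definition iso_state :: "nat \<Rightarrow> real \<Rightarrow> complex mat" where
  "iso_state n lam = (complex_of_real (lam / (real n)\<^sup>2)) \<cdot>\<^sub>m kron (1\<^sub>m n) (1\<^sub>m n)
                   + complex_of_real (1 - lam) \<cdot>\<^sub>m Pplus n"

end

theory Submission
  imports Defs
begin
definition Em :: "nat \<Rightarrow> complex \<Rightarrow> nat \<Rightarrow> nat \<Rightarrow> complex mat" where
 "Em n c k l = mat n n (\<lambda>(i,j). if i=k \<and> j=l then c else 0)"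

lemma tr_shift: assumes "a + m \<le> n" shows "mtrace (mat m m (\<lambda>(i,j). Em n c k k $$ (i+a, j+a))) = (if a \<le> k \<and> k < a + m then c else 0)"
proof -
  have "mtrace (mat m m (\<lambda>(i,j). Em n c k k $$ (i+a, j+a))) = (\<Sum>i<m. if i = k - a \<and> a \<le> k then c else 0)"
    unfolding mtrace_def Em_def using assms by (intro sum.cong) auto
  also have "\<dots> = (if a \<le> k \<and> k < a + m then c else 0)"
    by (auto simp: sum.delta)
  finally show ?thesis .
qed

lemma dim_Em[simp]: "dim_row (Em n c k l) = n" "dim_col (Em n c k l) = n"
  by (auto simp: Em_def)

lemma index_Em[simp]: "i < n \<Longrightarrow> j < n \<Longrightarrow> Em n c k l $$ (i,j) = (if i=k \<and> j=l then c else 0)"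
  by (auto simp: Em_def)

lemma dim_adj[simp]: "dim_row (adj A) = dim_col A" "dim_col (adj A) = dim_row A"
  by (auto simp: adj_def)

lemma tr0: assumes "m \<le> n" shows "mtrace (mat m m (($$) (Em n c k k))) = (if k < m then c else 0)"
  using tr_shift[of 0 m n c k] assms by (simp add: case_prod_unfold)

lemma phi_diag:
  assumes "N \<ge> 1" "k < 4*N" "i < 4*N"
  shows "PhiU N U (Em (4*N) c k k) $$ (i,i) = (1 / of_nat (2*N)) * (if (i < 2*N) = (2*N \<le> k) then c else 0)"
  using assms unfolding PhiU_def split_block_def Let_def
  apply (simp add: tr_shift[where n="4*N"] tr0)
  done

lemma phi_off:
  assumes "N \<ge> 1" "k < 4*N" "l < 4*N" "U \<in> carrier_mat (2*N) (2*N)"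
  shows "PhiU N U (Em (4*N) c k l) $$ (k,l) = (1 / of_nat (2*N)) * (if (k < 2*N) = (l < 2*N) then 0 else - c)"
proof -
  have z1: "mat (2*N) (2*N) (\<lambda>(i,j). Em (4*N) c k l $$ (i + 2*N, j)) = 0\<^sub>m (2*N) (2*N)" if "k < 2*N"
    using that assms by (intro eq_matI) (auto simp: Em_def)
  have z2: "mat (2*N) (2*N) (\<lambda>(i,j). Em (4*N) c k l $$ (i, j + 2*N)) = 0\<^sub>m (2*N) (2*N)" if "2*N \<le> k"
    using that assms by (intro eq_matI) (auto simp: Em_def)
  have tr: "mtrace (mat m m (\<lambda>(i,j). Em n c k k $$ (i+a, j+a))) = (if a \<le> k \<and> k < a + m then c else 0)" if "a + m \<le> n" for a m n
    using tr_shift that by blast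
  have dU: "dim_col U = 2*N" "dim_row U = 2*N" using assms by auto
  show ?thesis
  proof (cases "k < 2*N")
    case True
    then show ?thesis using assms unfolding PhiU_def split_block_def Let_def
      by (auto simp: z1 tr_shift[where n="4*N"] tr0 dU)
  next
    case False
    then show ?thesis using assms unfolding PhiU_def split_block_def Let_def
      by (cases "k = l") (auto simp: z2 tr_shift[where n="4*N"] tr0 dU)
  qed
qed
lemma sum_split: "(\<Sum>a<n*n. (f::nat\<Rightarrow>complex) a) = (\<Sum>k<n. \<Sum>i<n. f (k*n+i))"
proof -
  have "(\<Sum>a<n*n. f a) = (\<Sum>k<n. \<Sum>a\<in>{k*n..<k*n+n}. f a)"
    using sum.nat_group[of f n n] by simp
  also have "\<dots> = (\<Sum>k<n. \<Sum>i<n. f (k*n+i))"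
  proof (rule sum.cong[OF refl])
    fix k
    show "(\<Sum>a\<in>{k*n..<k*n+n}. f a) = (\<Sum>i<n. f (k*n+i))"
      using sum.shift_bounds_nat_ivl[of f 0 "k*n" n] by (simp add: atLeast0LessThan add.commute)
  qed
  finally show ?thesis .
qed

lemma sum_half: "(\<Sum>i<4*N. (if (i < 2*N) = P then c else 0)) = of_nat (2*N) * (c::complex)"
proof -
  have "(\<Sum>i<4*N. (if (i < 2*N) = P then c else 0)) = (\<Sum>i\<in>{..<2*N} \<union> {2*N..<4*N}. (if (i < 2*N) = P then c else 0))"
    by (intro sum.cong) auto
  also have "\<dots> = (\<Sum>i\<in>{..<2*N}. (if (i < 2*N) = P then c else 0)) + (\<Sum>i\<in>{2*N..<4*N}. (if (i < 2*N) = P then c else 0))"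
    by (intro sum.union_disjoint) auto
  also have "\<dots> = (\<Sum>i\<in>{..<2*N}. (if P then c else 0)) + (\<Sum>i\<in>{2*N..<4*N}. (if P then 0 else c))"
    by (intro arg_cong2[where f="(+)"] sum.cong) auto
  also have "\<dots> = of_nat (2*N) * c"
    by (cases P) auto
  finally show ?thesis .
qed
lemma Pplus_dim[simp]: "dim_row (Pplus n) = n*n" "dim_col (Pplus n) = n*n"
  by (auto simp: Pplus_def)

lemma dd: assumes "A < (n::nat)" "B < n" shows "(\<Sum>k<n. \<Sum>l<n. if k = A then if l = B then C else 0 else 0) = (C::complex)"
proof -
  have "(\<Sum>k<n. \<Sum>l<n. if k = A then if l = B then C else 0 else 0) = (\<Sum>k<n. if k = A then C else 0)"
    using assms by (intro sum.cong refl) simp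
  also have "\<dots> = C" using assms by simp
  finally show ?thesis .
qed

lemma Pplus_entry:
  assumes "a < n*n" "b < n*n"
  shows "Pplus n $$ (a,b) = (if a div n = a mod n \<and> b div n = b mod n then 1 / of_nat n else 0)"
proof -
  have n0: "n > 0" using assms by (cases n) auto
  have ad: "a div n < n" "b div n < n" using assms by (auto simp: less_mult_imp_div_less)
  have am: "a mod n < n" "b mod n < n" using n0 by auto
  have "(\<Sum>k<n. \<Sum>l<n. kron (ket_bra n k l) (ket_bra n k l) $$ (a, b))
      = (\<Sum>k<n. \<Sum>l<n. if k = a div n then (if l = b div n then (if a div n = a mod n \<and> b div n = b mod n then 1 else 0) else 0) else (0::complex))"
    using assms ad am by (intro sum.cong refl) (auto simp: kron_def ket_bra_def)
  also have "\<dots> = (if a div n = a mod n \<and> b div n = b mod n then 1 else 0)"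
    using ad by (rule dd)
  finally show ?thesis using assms unfolding Pplus_def by simp
qed

lemma WU_dim[simp]: "dim_row (WU N U) = 4*N*(4*N)" "dim_col (WU N U) = 4*N*(4*N)"
  by (auto simp: WU_def id_tensor_def)

lemma WU_entry:
  assumes "a < 4*N*(4*N)" "b < 4*N*(4*N)"
  shows "WU N U $$ (a,b) = PhiU N U (Em (4*N) (1 / of_nat (4*N)) (a div (4*N)) (b div (4*N))) $$ (a mod (4*N), b mod (4*N))"
proof -
  let ?n = "4*N"
  have n0: "?n > 0" using assms by (cases N) auto
  have ad: "a div ?n < ?n" "b div ?n < ?n" using assms by (auto simp: less_mult_imp_div_less)
  have bl: "mat ?n ?n (\<lambda>(i, j). Pplus ?n $$ (a div ?n * ?n + i, b div ?n * ?n + j))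
     = Em ?n (1 / of_nat ?n) (a div ?n) (b div ?n)"
  proof (rule eq_matI)
    fix i j assume ij: "i < dim_row (Em ?n (1 / of_nat ?n) (a div ?n) (b div ?n))" "j < dim_col (Em ?n (1 / of_nat ?n) (a div ?n) (b div ?n))"
    then have ij': "i < ?n" "j < ?n" by auto
    have lt: "a div ?n * ?n + i < ?n * ?n" "b div ?n * ?n + j < ?n * ?n"
    proof -
      have "a div ?n * ?n + i < a div ?n * ?n + ?n" using ij' by simp
      also have "\<dots> = (a div ?n + 1) * ?n" by simp
      also have "\<dots> \<le> ?n * ?n" using ad by (intro mult_right_mono) auto
      finally show "a div ?n * ?n + i < ?n * ?n" .
      have "b div ?n * ?n + j < b div ?n * ?n + ?n" using ij' by simp
      also have "\<dots> = (b div ?n + 1) * ?n" by simp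
      also have "\<dots> \<le> ?n * ?n" using ad by (intro mult_right_mono) auto
      finally show "b div ?n * ?n + j < ?n * ?n" .
    qed
    show "mat ?n ?n (\<lambda>(i, j). Pplus ?n $$ (a div ?n * ?n + i, b div ?n * ?n + j)) $$ (i, j) =
         Em ?n (1 / of_nat ?n) (a div ?n) (b div ?n) $$ (i, j)"
      using ij' lt n0 by (auto simp: Pplus_entry)
  qed auto
  show ?thesis using assms unfolding WU_def id_tensor_def by (simp add: bl)
qed

lemma kron_dim[simp]: "dim_row (kron A B) = dim_row A * dim_row B" "dim_col (kron A B) = dim_col A * dim_col B"
  by (auto simp: kron_def)

lemma iso_dim[simp]: "dim_row (iso_state n lam) = n*n" "dim_col (iso_state n lam) = n*n"
  by (auto simp: iso_state_def kron_def)

lemma iso_entry: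
  assumes "a < n*n" "b < n*n"
  shows "iso_state n lam $$ (b,a) = complex_of_real (lam / (real n)\<^sup>2) * (if b = a then 1 else 0)
     + complex_of_real (1 - lam) * (if a div n = a mod n \<and> b div n = b mod n then 1 / of_nat n else 0)"
proof -
  have n0: "n > 0" using assms by (cases n) auto
  have ad: "a div n < n" "b div n < n" using assms by (auto simp: less_mult_imp_div_less)
  have eq: "(b div n = a div n \<and> b mod n = a mod n) = (b = a)"
    by (metis div_mult_mod_eq)
  have "kron (1\<^sub>m n) (1\<^sub>m n) $$ (b,a) = (if b = a then 1 else 0)"
    using assms ad n0 eq[symmetric] by (auto simp: kron_def)
  then show ?thesis using assms unfolding iso_state_def by (auto simp: Pplus_entry)
qed

theorem lemma2:
  fixes N :: nat and U :: "complex mat" and lam :: real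
  assumes "N \<ge> 1"
    and "unitary_mat (2 * N) U"
    and "transpose_mat U = - U"
    and "0 \<le> lam" and "lam \<le> 1"
    and "lam < real (4 * N) / real (4 * N + 1)"
  shows "mtrace (WU N U * iso_state (4 * N) lam) < 0"
proof -
  let ?n = "4*N"
  define W where "W = WU N U"
  define c :: complex where "c = 1 / of_nat ?n"
  define \<alpha> where "\<alpha> = complex_of_real (lam / (real ?n)\<^sup>2)"
  define \<beta> where "\<beta> = complex_of_real (1 - lam)"
  have Uc: "U \<in> carrier_mat (2*N) (2*N)" using assms(2) by (simp add: unitary_mat_def)
  have n0: "?n > 0" using assms by simp
  let ?P = "\<lambda>a. a div ?n = a mod ?n"
  have divk: "(k * ?n + i) div ?n = k" "(k * ?n + i) mod ?n = i" if "i < ?n" for k i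
    using that by auto
  have lt: "k * ?n + i < ?n * ?n" if "k < ?n" "i < ?n" for k i
  proof -
    have "k * ?n + i < k * ?n + ?n" using that by simp
    also have "\<dots> = (k + 1) * ?n" by simp
    also have "\<dots> \<le> ?n * ?n" using that by (intro mult_right_mono) auto
    finally show ?thesis .
  qed
  have We: "W $$ (k*?n+i, l*?n+j) = PhiU N U (Em ?n c k l) $$ (i,j)" if "k<?n" "i<?n" "l<?n" "j<?n" for k i l j
    using WU_entry[OF lt[OF that(1,2)] lt[OF that(3,4)]] that unfolding W_def c_def by (simp only: divk)
  have step1: "mtrace (W * iso_state ?n lam) = (\<Sum>a<?n*?n. \<Sum>b<?n*?n. W $$ (a,b) * iso_state ?n lam $$ (b,a))"
    unfolding mtrace_def W_def by (intro sum.cong refl) (auto simp: scalar_prod_def atLeast0LessThan)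
  also have "\<dots> = (\<Sum>a<?n*?n. \<alpha> * W $$ (a,a) + \<beta> * c * (if ?P a then (\<Sum>b<?n*?n. if ?P b then W $$ (a,b) else 0) else 0))"
  proof (rule sum.cong[OF refl])
    fix a assume a: "a \<in> {..<?n*?n}"
    have "(\<Sum>b<?n*?n. W $$ (a,b) * iso_state ?n lam $$ (b,a))
        = (\<Sum>b<?n*?n. \<alpha> * (if b = a then W $$ (a,b) else 0) + \<beta> * c * (if ?P a then (if ?P b then W $$ (a,b) else 0) else 0))"
      using a by (intro sum.cong refl) (auto simp: iso_entry \<alpha>_def \<beta>_def c_def algebra_simps diff_divide_distrib)
    also have "\<dots> = \<alpha> * W $$ (a,a) + \<beta> * c * (if ?P a then (\<Sum>b<?n*?n. if ?P b then W $$ (a,b) else 0) else 0)"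
      using a by (cases "?P a") (simp_all add: sum.distrib sum_distrib_left[symmetric])
    finally show "(\<Sum>b<?n*?n. W $$ (a,b) * iso_state ?n lam $$ (b,a)) = \<alpha> * W $$ (a,a) + \<beta> * c * (if ?P a then (\<Sum>b<?n*?n. if ?P b then W $$ (a,b) else 0) else 0)" .
  qed
  also have "\<dots> = \<alpha> * (\<Sum>a<?n*?n. W $$ (a,a)) + \<beta> * c * (\<Sum>a<?n*?n. if ?P a then (\<Sum>b<?n*?n. if ?P b then W $$ (a,b) else 0) else 0)"
    by (simp add: sum.distrib sum_distrib_left)
  finally have tr: "mtrace (W * iso_state ?n lam) = \<alpha> * (\<Sum>a<?n*?n. W $$ (a,a)) + \<beta> * c * (\<Sum>a<?n*?n. if ?P a then (\<Sum>b<?n*?n. if ?P b then W $$ (a,b) else 0) else 0)" .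
  have S1: "(\<Sum>a<?n*?n. W $$ (a,a)) = 1"
  proof -
    have "(\<Sum>a<?n*?n. W $$ (a,a)) = (\<Sum>k<?n. \<Sum>i<?n. W $$ (k*?n+i, k*?n+i))"
      by (rule sum_split)
    also have "\<dots> = (\<Sum>k<?n. \<Sum>i<?n. (1 / of_nat (2*N)) * (if (i < 2*N) = (2*N \<le> k) then c else 0))"
      using assms(1) by (intro sum.cong refl) (simp add: We phi_diag)
    also have "\<dots> = (\<Sum>k<?n. c)"
      using assms(1) by (intro sum.cong refl) (simp only: sum_distrib_left[symmetric] sum_half, simp)
    also have "\<dots> = 1" using n0 by (simp add: c_def)
    finally show ?thesis .
  qed
  have S2: "(\<Sum>a<?n*?n. if ?P a then (\<Sum>b<?n*?n. if ?P b then W $$ (a,b) else 0) else 0) = -1"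
  proof -
    have "(\<Sum>a<?n*?n. if ?P a then (\<Sum>b<?n*?n. if ?P b then W $$ (a,b) else 0) else 0)
      = (\<Sum>k<?n. \<Sum>i<?n. if k = i then (\<Sum>b<?n*?n. if ?P b then W $$ (k*?n+i,b) else 0) else 0)"
      by (subst sum_split) (intro sum.cong refl, simp add: divk)
    also have "\<dots> = (\<Sum>k<?n. \<Sum>b<?n*?n. if ?P b then W $$ (k*?n+k,b) else 0)"
      by (rule sum.cong[OF refl]) simp
    also have "\<dots> = (\<Sum>k<?n. \<Sum>l<?n. \<Sum>j<?n. if l = j then W $$ (k*?n+k,l*?n+j) else 0)"
      by (rule sum.cong[OF refl], subst sum_split, rule sum.cong[OF refl], rule sum.cong[OF refl], simp add: divk)
    also have "\<dots> = (\<Sum>k<?n. \<Sum>l<?n. W $$ (k*?n+k,l*?n+l))"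
      by (rule sum.cong[OF refl]) simp
    also have "\<dots> = (\<Sum>k<?n. \<Sum>l<?n. (1 / of_nat (2*N)) * (if (l < 2*N) = (\<not> k < 2*N) then - c else 0))"
      using assms(1) Uc by (intro sum.cong refl) (auto simp: We phi_off)
    also have "\<dots> = (\<Sum>k<?n. - c)"
      using assms(1) by (intro sum.cong refl) (simp only: sum_distrib_left[symmetric] sum_half, simp)
    also have "\<dots> = -1" using n0 by (simp add: c_def)
    finally show ?thesis .
  qed
  have val: "mtrace (WU N U * iso_state ?n lam) = complex_of_real (lam / (real ?n)\<^sup>2 - (1 - lam) / real ?n)"
  proof -
    have "mtrace (W * iso_state ?n lam) = \<alpha> - \<beta> * c" using tr S1 S2 by simp
    also have "\<dots> = complex_of_real (lam / (real ?n)\<^sup>2 - (1 - lam) / real ?n)"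
      unfolding \<alpha>_def \<beta>_def c_def by simp
    finally show ?thesis unfolding W_def .
  qed
  have r: "lam / (real ?n)\<^sup>2 - (1 - lam) / real ?n < 0"
  proof -
    have np: "real ?n > 0" using n0 by simp
    have "lam * (real ?n + 1) < real ?n"
      using assms(6) np by (simp add: field_simps)
    then have "lam < real ?n * (1 - lam)" by (simp add: algebra_simps)
    then have "lam / (real ?n)\<^sup>2 < real ?n * (1 - lam) / (real ?n)\<^sup>2"
      using np by (intro divide_strict_right_mono) auto
    also have "\<dots> = (1 - lam) / real ?n" using np by (simp add: power2_eq_square field_simps)
    finally show ?thesis by simp
  qed
  show ?thesis unfolding val using r by (simp add: less_complex_def)
qed

end
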